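(* Let $\mu$ be a probability measure on $\mathbb{C}$ with compact support, and let $X_1, X_2, \ldots$ be iid random variables with distribution $\mu$. For each $n\ge1$ let $\xi_1^{(n)}, \ldots, \xi_{k_n}^{(n)}$ be deterministic complex numbers, where $k_n \le K$ for some constant $K$ independent of $n$ (no bound on the magnitudes $|\xi_l^{(n)}|$ is assumed). Fix $\varepsilon > 0$ and suppose that for all sufficiently large $n$: none of $\xi_1^{(n)}, \ldots, \xi_{k_n}^{(n)}$ lies in $N_\mu(3\varepsilon)\setminus N_\mu(\varepsilon)$, the value $\xi_1^{(n)}$ lies outside $N_\mu(3\varepsilon)$, and $\xi_2^{(n)},\ldots,\xi_{k_n}^{(n)}$ lie in $N_\mu(\varepsilon)$. Then there is a constant $C>0$ such that, almost surely, for all sufficiently large $n$, the polynomial \[ p_n(z) := \prod_{j=1}^{n-k_n} (z - X_j) \prod_{l=1}^{k_n} (z - \xi_l^{(n)}) \] has exactly one critical point $w_1(p_n)$ outside $N_\mu(2\varepsilon)$, and it satisfies \[ |w_1(p_n) - \xi_1^{(n)}| \le \frac{C}{n}\left(1 + |\xi_1^{(n)}|\right), \] i.e. $w_1(p_n) = \xi_1^{(n)}(1 + O(1/n)) + O(1/n)$.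
   Context: For a probability measure $\mu$ on $\mathbb{C}$, $m_\mu(z) := \int_{\mathbb{C}} \frac{d\mu(x)}{z-x}$ for $z \notin \operatorname{supp}(\mu)$; $M_\mu := \{ z \in \mathbb{C}\setminus \operatorname{supp}(\mu) : m_\mu(z) = 0\}$; and $N_\mu(\varepsilon) := \{ z \in \mathbb{C} : \operatorname{dist}(z, \operatorname{supp}(\mu) \cup M_\mu) < \varepsilon\}$. A critical point of a polynomial is a zero of its derivative. *)

theory Defs
  imports "HOL-Probability.Probability" "HOL-Computational_Algebra.Polynomial"
begin

definition msupp :: "complex measure \<Rightarrow> complex set" where
  "msupp \<mu> = {z. \<forall>e>0. measure \<mu> (ball z e) > 0}"

definition cst :: "complex measure \<Rightarrow> complex \<Rightarrow> complex" where
  "cst \<mu> z = integral\<^sup>L \<mu> (\<lambda>x. 1 / (z - x))"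

definition Mset :: "complex measure \<Rightarrow> complex set" where
  "Mset \<mu> = {z. z \<notin> msupp \<mu> \<and> cst \<mu> z = 0}"

definition Nnbhd :: "complex measure \<Rightarrow> real \<Rightarrow> complex set" where
  "Nnbhd \<mu> e = {z. infdist z (msupp \<mu> \<union> Mset \<mu>) < e}"

definition pn :: "(nat \<Rightarrow> complex) \<Rightarrow> nat \<Rightarrow> (nat \<Rightarrow> complex) \<Rightarrow> nat \<Rightarrow> complex poly" where
  "pn x k xi n = (\<Prod>j\<in>{1..n - k}. [:- x j, 1:]) * (\<Prod>l\<in>{1..k}. [:- xi l, 1:])"

end

theory Submission
  imports Defs
begin


lemma poly_pderiv_mult: fixes p q :: "complex poly" shows "poly (pderiv (p * q)) z = poly (pderiv p) z * poly q z + poly p z * poly (pderiv q) z"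
  by (simp only: pderiv_mult poly_add poly_mult) (simp add: algebra_simps)

lemma pderiv_lin: "pderiv [:c, 1:] = (1::complex poly)"
  by (simp add: pderiv_pCons)

lemma pderiv_prod_lin:
  fixes a :: "'b \<Rightarrow> complex"
  assumes "finite I" "\<forall>i\<in>I. z \<noteq> a i"
  shows "poly (pderiv (\<Prod>i\<in>I. [:- a i, 1:])) z = poly (\<Prod>i\<in>I. [:- a i, 1:]) z * (\<Sum>i\<in>I. 1 / (z - a i))"
  using assms
proof (induction I rule: finite_induct)
  case empty then show ?case by simp
next
  case (insert x F)
  have nz: "z - a x \<noteq> 0" using insert by auto
  let ?P = "\<Prod>i\<in>F. [:- a i, 1:]"
  have "poly (pderiv (\<Prod>i\<in>insert x F. [:- a i, 1:])) z = poly (pderiv ([:- a x, 1:] * ?P)) z"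
    using insert by simp
  also have "\<dots> = poly ?P z + (z - a x) * poly (pderiv ?P) z"
    unfolding poly_pderiv_mult pderiv_lin by simp
  also have "\<dots> = poly ?P z + (z - a x) * (poly ?P z * (\<Sum>i\<in>F. 1 / (z - a i)))"
    using insert by simp
  also have "\<dots> = (z - a x) * poly ?P z * (1 / (z - a x) + (\<Sum>i\<in>F. 1 / (z - a i)))"
    using nz by (simp add: field_simps)
  also have "\<dots> = poly (\<Prod>i\<in>insert x F. [:- a i, 1:]) z * (\<Sum>i\<in>insert x F. 1 / (z - a i))"
    using insert by (simp add: algebra_simps)
  finally show ?case .
qed



lemma sum_diff_bound:
  fixes a :: "'b \<Rightarrow> complex"
  assumes fin: "finite I" and cardI: "card I \<le> Q" and kap: "\<kappa> > 0"
    and hz: "\<forall>i\<in>I. \<kappa> * (1 + cmod z) \<le> cmod (z - a i)"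
    and hz': "\<forall>i\<in>I. \<kappa> * (1 + cmod z') \<le> cmod (z' - a i)"
  shows "cmod ((\<Sum>i\<in>I. 1/(z - a i)) - (\<Sum>i\<in>I. 1/(z' - a i)))
           \<le> cmod (z - z') * (Q / (\<kappa>^2 * (1 + cmod z) * (1 + cmod z')))"
proof -
  define W where "W = 1 + cmod z"
  define W' where "W' = 1 + cmod z'"
  have W: "W > 0" "W' > 0" unfolding W_def W'_def by (auto intro: add_pos_nonneg)
  have Q0: "0 \<le> Q" using cardI by linarith
  have "(\<Sum>i\<in>I. 1/(z - a i)) - (\<Sum>i\<in>I. 1/(z' - a i)) = (\<Sum>i\<in>I. (z' - z) / ((z - a i) * (z' - a i)))"
  proof -
    have "1/(z - a i) - 1/(z' - a i) = (z' - z) / ((z - a i) * (z' - a i))" if "i \<in> I" for i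
    proof -
      have "z - a i \<noteq> 0" "z' - a i \<noteq> 0"
        using hz hz' that kap W unfolding W_def W'_def
        by (metis mult_pos_pos norm_zero not_le)+
      then show ?thesis by (simp add: field_simps)
    qed
    then show ?thesis by (simp add: sum_subtractf[symmetric])
  qed
  also have "cmod \<dots> \<le> (\<Sum>i\<in>I. cmod ((z' - z) / ((z - a i) * (z' - a i))))"
    by (rule norm_sum)
  also have "\<dots> \<le> (\<Sum>i\<in>I. cmod (z - z') / ((\<kappa> * W) * (\<kappa> * W')))"
  proof (rule sum_mono)
    fix i assume i: "i \<in> I"
    have "cmod ((z' - z) / ((z - a i) * (z' - a i))) = cmod (z - z') / (cmod (z - a i) * cmod (z' - a i))"
      by (simp add: norm_divide norm_mult norm_minus_commute)
    also have "\<dots> \<le> cmod (z - z') / ((\<kappa> * W) * (\<kappa> * W'))"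
    proof -
      have h1: "\<kappa>*W \<le> cmod (z - a i)" "\<kappa>*W' \<le> cmod (z' - a i)"
        using hz hz' i unfolding W_def W'_def by auto
      have "0 < \<kappa>*W" "0 < \<kappa>*W'" using kap W by auto
      then show ?thesis using h1 kap W mult_pos_pos[OF kap W(1)] mult_pos_pos[OF kap W(2)]
        by (intro divide_left_mono mult_mono mult_pos_pos) (auto simp: mult_le_0_iff)
    qed
    finally show "cmod ((z' - z) / ((z - a i) * (z' - a i))) \<le> cmod (z - z') / ((\<kappa> * W) * (\<kappa> * W'))" .
  qed
  also have "\<dots> = card I * (cmod (z - z') / ((\<kappa> * W) * (\<kappa> * W')))" by simp
  also have "\<dots> \<le> Q * (cmod (z - z') / ((\<kappa> * W) * (\<kappa> * W')))"
    using cardI kap W by (intro mult_right_mono) auto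
  also have "\<dots> = cmod (z - z') * (Q / (\<kappa>^2 * W * W'))"
    by (simp add: power2_eq_square field_simps)
  finally show ?thesis unfolding W_def W'_def .
qed

lemma sum_sq_bound:
  fixes a :: "'b \<Rightarrow> complex"
  assumes fin: "finite I" and cardI: "card I \<le> Q" and kap: "\<kappa> > 0"
    and hz: "\<forall>i\<in>I. \<kappa> * (1 + cmod z) \<le> cmod (z - a i)"
  shows "cmod (\<Sum>i\<in>I. 1/(z - a i)^2) \<le> Q / (\<kappa>^2 * (1 + cmod z)^2)"
proof -
  define W where "W = 1 + cmod z"
  have W: "W > 0" unfolding W_def by (auto intro: add_pos_nonneg)
  have "cmod (\<Sum>i\<in>I. 1/(z - a i)^2) \<le> (\<Sum>i\<in>I. cmod (1/(z - a i)^2))"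
    by (rule norm_sum)
  also have "\<dots> \<le> (\<Sum>i\<in>I. 1 / (\<kappa> * W)^2)"
  proof (rule sum_mono)
    fix i assume i: "i \<in> I"
    have "cmod (1/(z - a i)^2) = 1 / (cmod (z - a i))^2"
      by (simp add: norm_divide norm_power)
    also have "\<dots> \<le> 1 / (\<kappa> * W)^2"
    proof -
      have h1: "\<kappa>*W \<le> cmod (z - a i)"
        using hz i unfolding W_def by auto
      have "0 < \<kappa>*W" using kap W by auto
      then show ?thesis using h1
        by (intro divide_left_mono power_mono mult_pos_pos) auto
    qed
    finally show "cmod (1/(z - a i)^2) \<le> 1 / (\<kappa> * W)^2" .
  qed
  also have "\<dots> = card I * (1 / (\<kappa> * W)^2)" by simp
  also have "\<dots> \<le> Q * (1 / (\<kappa> * W)^2)"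
    using cardI kap W by (intro mult_right_mono) auto
  also have "\<dots> = Q / (\<kappa>^2 * W^2)"
    by (simp add: power_mult_distrib)
  finally show ?thesis unfolding W_def .
qed



lemma alg_aux: fixes a Q k Wx Wy l :: real
  shows "Wx\<noteq>0 \<Longrightarrow> Wy\<noteq>0 \<Longrightarrow> l\<noteq>0 \<Longrightarrow> k\<noteq>0 \<Longrightarrow> a*(Q/(k^2*Wx*Wy))*(Wx/l)*(Wy/l) = a*(Q/(k^2*l^2))"
  by (simp add: field_simps power2_eq_square)

lemma core:
  fixes a :: "'b \<Rightarrow> complex" and U :: "complex set" and I :: "'b set"
  defines "g \<equiv> \<lambda>z. \<Sum>i\<in>I. 1/(z - a i)"
  assumes fin: "finite I" and cardI: "card I \<le> Q" and kap: "\<kappa> > 0" and lam: "lam \<ge> 2"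
    and H1: "\<forall>z\<in>U. \<forall>i\<in>I. \<kappa> * (1 + cmod z) \<le> cmod (z - a i)"
    and H2: "\<forall>z\<in>U. lam / (1 + cmod z) \<le> cmod (g z)"
    and H3: "cball \<xi> (2*(1 + cmod \<xi>)/lam) \<subseteq> U"
    and H4: "2 * Q \<le> \<kappa>^2 * lam^2"
  shows "\<exists>w. {z\<in>U. 1 + (z - \<xi>) * g z = 0} = {w} \<and> cmod (w - \<xi>) \<le> 2*(1 + cmod \<xi>)/lam
           \<and> (g w)^2 + (\<Sum>i\<in>I. 1/(w - a i)^2) \<noteq> 0"
proof -
  define W0 where "W0 = 1 + cmod \<xi>"
  define \<rho> where "\<rho> = 2 * W0 / lam"
  have W0: "W0 \<ge> 1" unfolding W0_def by simp
  have Wpos: "1 + cmod z > 0" for z :: complex by (auto intro: add_pos_nonneg)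
  have rho: "\<rho> > 0" "\<rho> \<le> W0" using lam W0 unfolding \<rho>_def by (auto simp: field_simps)
  have Q0: "Q \<ge> 0" using cardI by linarith
  have gnz: "g z \<noteq> 0" and ginv: "1 / cmod (g z) \<le> (1 + cmod z) / lam" if "z \<in> U" for z
  proof -
    have "lam / (1 + cmod z) \<le> cmod (g z)" using H2 that by auto
    moreover have "lam / (1 + cmod z) > 0" using lam Wpos[of z] by auto
    ultimately have G: "cmod (g z) > 0" by linarith
    then show "g z \<noteq> 0" by auto
    have "lam \<le> cmod (g z) * (1 + cmod z)"
      using \<open>lam / (1 + cmod z) \<le> cmod (g z)\<close> Wpos[of z] by (simp add: divide_le_eq)
    then show "1 / cmod (g z) \<le> (1 + cmod z) / lam"
      using G lam by (simp add: divide_le_eq le_divide_eq mult.commute)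
  qed
  have Wtri: "1 + cmod z \<le> W0 + cmod (z - \<xi>)" for z
    unfolding W0_def using norm_triangle_ineq2[of z \<xi>] by linarith
  have Z: "cmod (z - \<xi>) \<le> \<rho>" if "z \<in> U" "1 + (z - \<xi>) * g z = 0" for z
  proof -
    have "(z - \<xi>) = - 1 / g z" using that gnz[OF that(1)] by (auto simp: field_simps add_eq_0_iff)
    then have d: "cmod (z - \<xi>) = 1 / cmod (g z)" by (simp add: norm_divide)
    with ginv[OF that(1)] Wtri[of z] have "cmod (z - \<xi>) \<le> (W0 + cmod (z - \<xi>)) / lam"
      using lam by (smt (verit) divide_right_mono)
    then have "cmod (z - \<xi>) * lam \<le> W0 + cmod (z - \<xi>)" using lam by (simp add: field_simps)
    then have "cmod (z - \<xi>) * (lam - 1) \<le> W0" by (simp add: algebra_simps)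
    moreover have "cmod (z - \<xi>) * lam \<le> 2 * (cmod (z - \<xi>) * (lam - 1))"
      using lam mult_right_mono[OF lam norm_ge_zero[of "z - \<xi>"]] by (simp add: algebra_simps)
    ultimately have "cmod (z - \<xi>) * lam \<le> 2 * W0" by linarith
    then show ?thesis unfolding \<rho>_def using lam by (simp add: field_simps)
  qed
  define T where "T = (\<lambda>z. \<xi> - 1 / g z)"
  define S where "S = cball \<xi> \<rho>"
  have SU: "S \<subseteq> U" using H3 unfolding S_def \<rho>_def W0_def by simp
  have TS: "T ` S \<subseteq> S"
  proof
    fix y assume "y \<in> T ` S"
    then obtain z where z: "z \<in> S" "y = T z" by auto
    have zU: "z \<in> U" using z SU by auto
    have "dist \<xi> y = 1 / cmod (g z)" unfolding z T_def dist_norm by (simp add: norm_divide)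
    also have "\<dots> \<le> (1 + cmod z) / lam" by (rule ginv[OF zU])
    also have "\<dots> \<le> (W0 + \<rho>) / lam"
      using Wtri[of z] z(1) lam unfolding S_def by (intro divide_right_mono) (auto simp: dist_norm norm_minus_commute)
    also have "\<dots> \<le> \<rho>" using rho lam unfolding \<rho>_def by (simp add: field_simps)
    finally show "y \<in> S" unfolding S_def by simp
  qed
  have lip: "dist (T x) (T y) \<le> (1/2) * dist x y" if "x \<in> S" "y \<in> S" for x y
  proof -
    have xU: "x \<in> U" and yU: "y \<in> U" using that SU by auto
    have gx: "g x \<noteq> 0" and gy: "g y \<noteq> 0" using gnz xU yU by auto
    have "dist (T x) (T y) = cmod (g x - g y) * (1 / cmod (g x)) * (1 / cmod (g y))"
      unfolding T_def dist_norm using gx gy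
      by (simp add: norm_divide norm_mult field_simps norm_minus_commute)
    also have "\<dots> \<le> (cmod (x - y) * (Q / (\<kappa>^2 * (1 + cmod x) * (1 + cmod y)))) * ((1 + cmod x) / lam) * ((1 + cmod y) / lam)"
    proof -
      have gd: "cmod (g x - g y) \<le> cmod (x - y) * (Q / (\<kappa>^2 * (1 + cmod x) * (1 + cmod y)))"
        unfolding g_def using sum_diff_bound[OF fin cardI kap, of x a y] H1 xU yU by auto
      show ?thesis
        apply (intro mult_mono)
        using gd ginv[OF xU] ginv[OF yU] Wpos[of x] Wpos[of y] lam Q0
        by (auto intro!: mult_nonneg_nonneg divide_nonneg_nonneg)
    qed
    also have "\<dots> = cmod (x - y) * (Q / (\<kappa>^2 * lam^2))"
      using Wpos[of x] Wpos[of y] lam kap by (intro alg_aux) auto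
    also have "\<dots> \<le> cmod (x - y) * (1/2)"
      using H4 kap lam by (intro mult_left_mono) (auto simp: field_simps)
    finally show ?thesis by (simp add: dist_norm mult.commute)
  qed
  have "\<exists>!x\<in>S. T x = x"
    by (rule Banach_fix[of S "1/2" T]) (use TS lip rho in \<open>auto simp: S_def complete_eq_closed\<close>)
  then obtain w where w: "w \<in> S" "T w = w" and wuniq: "\<And>x. x \<in> S \<Longrightarrow> T x = x \<Longrightarrow> x = w" by blast
  have wU: "w \<in> U" using w SU by auto
  have Fw: "1 + (w - \<xi>) * g w = 0"
  proof -
    have "w - \<xi> = - 1 / g w" using w(2) unfolding T_def by (auto simp: algebra_simps)
    then show ?thesis using gnz[OF wU] by (simp add: field_simps)
  qed
  have set: "{z\<in>U. 1 + (z - \<xi>) * g z = 0} = {w}"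
  proof (intro equalityI subsetI)
    fix z assume "z \<in> {z\<in>U. 1 + (z - \<xi>) * g z = 0}"
    then have zU: "z \<in> U" and Fz: "1 + (z - \<xi>) * g z = 0" by auto
    have "z \<in> S" using Z[OF zU Fz] unfolding S_def by (simp add: dist_norm norm_minus_commute)
    moreover have "T z = z"
    proof -
      have "z - \<xi> = - 1 / g z" using Fz gnz[OF zU] by (auto simp: field_simps add_eq_0_iff)
      then show ?thesis unfolding T_def by (auto simp: algebra_simps)
    qed
    ultimately show "z \<in> {w}" using wuniq by auto
  next
    fix z assume "z \<in> {w}" then show "z \<in> {z\<in>U. 1 + (z - \<xi>) * g z = 0}" using wU Fw by auto
  qed
  have dw: "cmod (w - \<xi>) \<le> 2*(1 + cmod \<xi>)/lam"
    using w(1) unfolding S_def \<rho>_def W0_def by (simp add: dist_norm norm_minus_commute)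
  have nz: "(g w)^2 + (\<Sum>i\<in>I. 1/(w - a i)^2) \<noteq> 0"
  proof
    assume h: "(g w)^2 + (\<Sum>i\<in>I. 1/(w - a i)^2) = 0"
    define W where "W = 1 + cmod w"
    have Wp: "W > 0" using Wpos unfolding W_def by auto
    have "cmod (g w) \<ge> lam / W" using H2 wU unfolding W_def by auto
    then have "cmod (g w)^2 \<ge> (lam / W)^2" using lam Wp by (intro power_mono) auto
    moreover have "cmod (g w)^2 = cmod (\<Sum>i\<in>I. 1/(w - a i)^2)"
      using h by (metis add_eq_0_iff norm_minus_cancel norm_power)
    moreover have "cmod (\<Sum>i\<in>I. 1/(w - a i)^2) \<le> Q / (\<kappa>^2 * W^2)"
      using sum_sq_bound[OF fin cardI kap, of w a] H1 wU unfolding W_def by auto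
    moreover have "Q / (\<kappa>^2 * W^2) < (lam / W)^2"
    proof -
      have "Q / (\<kappa>^2 * W^2) \<le> (\<kappa>^2 * lam^2 / 2) / (\<kappa>^2 * W^2)"
        using H4 kap Wp by (intro divide_right_mono) auto
      also have "\<dots> = (lam / W)^2 / 2" using kap Wp by (simp add: field_simps power2_eq_square)
      also have "\<dots> < (lam / W)^2" using lam Wp by simp
      finally show ?thesis .
    qed
    ultimately show False by linarith
  qed
  show ?thesis using set dw nz by blast
qed



lemma deriv_g:
  fixes a :: "'b \<Rightarrow> complex"
  assumes "finite I" "w \<notin> a ` I"
  shows "((\<lambda>z. \<Sum>i\<in>I. 1/(z - a i)) has_field_derivative (- (\<Sum>i\<in>I. 1/(w - a i)^2))) (at w)"
proof -
  have "((\<lambda>z. \<Sum>i\<in>I. 1/(z - a i)) has_field_derivative (\<Sum>i\<in>I. - (1/(w - a i)^2))) (at w)"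
  proof (rule DERIV_sum)
    fix i assume i: "i \<in> I"
    then have nz: "w - a i \<noteq> 0" using assms by auto
    show "((\<lambda>z. 1/(z - a i)) has_field_derivative - (1/(w - a i)^2)) (at w)"
      by (rule derivative_eq_intros | use nz in \<open>simp add: power2_eq_square field_simps\<close>)+
  qed
  then show ?thesis by (simp add: sum_negf)
qed

lemma crit_poly:
  fixes a :: "'b \<Rightarrow> complex" and I :: "'b set"
  defines "q \<equiv> \<Prod>i\<in>I. [:- a i, 1:]"
  defines "g \<equiv> \<lambda>z. \<Sum>i\<in>I. 1/(z - a i)"
  assumes fin: "finite I"
  shows "z \<notin> a ` I \<Longrightarrow> poly (pderiv ([:- \<xi>, 1:] * q)) z = poly q z * (1 + (z - \<xi>) * g z)"
    and "z \<notin> a ` I \<Longrightarrow> poly q z \<noteq> 0"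
    and "w \<notin> a ` I \<Longrightarrow> 1 + (w - \<xi>) * g w = 0 \<Longrightarrow> (g w)^2 + (\<Sum>i\<in>I. 1/(w - a i)^2) \<noteq> 0
          \<Longrightarrow> order w (pderiv ([:- \<xi>, 1:] * q)) = 1"
proof -
  have qd: "poly (pderiv q) z = poly q z * g z" if "z \<notin> a ` I" for z
    unfolding q_def g_def using pderiv_prod_lin[OF fin, of z a] that by auto
  have pd: "poly (pderiv ([:- \<xi>, 1:] * q)) z = poly q z + (z - \<xi>) * poly (pderiv q) z" for z
    unfolding poly_pderiv_mult pderiv_lin by simp
  show 1: "poly (pderiv ([:- \<xi>, 1:] * q)) z = poly q z * (1 + (z - \<xi>) * g z)" if "z \<notin> a ` I" for z
    unfolding pd qd[OF that] by (simp add: algebra_simps)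
  show qnz: "poly q z \<noteq> 0" if "z \<notin> a ` I" for z
    using that fin unfolding q_def by (auto simp: poly_prod)
  assume w: "w \<notin> a ` I" and F: "1 + (w - \<xi>) * g w = 0" and nz: "(g w)^2 + (\<Sum>i\<in>I. 1/(w - a i)^2) \<noteq> 0"
  define p' where "p' = pderiv ([:- \<xi>, 1:] * q)"
  define V where "V = - (a ` I)"
  have V: "open V" "w \<in> V" unfolding V_def using w fin by (auto intro: finite_imp_closed)
  have gw: "g w \<noteq> 0" using F by auto
  have dq: "((\<lambda>z. poly q z * g z) has_field_derivative
      (poly (pderiv q) w * g w + poly q w * (- (\<Sum>i\<in>I. 1/(w - a i)^2)))) (at w)"
    unfolding g_def using DERIV_mult[OF poly_DERIV deriv_g[OF fin w], of q] by (simp add: algebra_simps)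
  have dq2: "((\<lambda>z. poly (pderiv q) z) has_field_derivative
      (poly (pderiv q) w * g w + poly q w * (- (\<Sum>i\<in>I. 1/(w - a i)^2)))) (at w)"
    by (rule has_field_derivative_transform_within_open[OF dq V]) (auto simp: V_def qd)
  have q2: "poly (pderiv (pderiv q)) w = poly q w * ((g w)^2 - (\<Sum>i\<in>I. 1/(w - a i)^2))"
    using DERIV_unique[OF poly_DERIV dq2] qd[OF w] by (simp add: algebra_simps power2_eq_square)
  have pdd: "poly (pderiv p') w = 2 * poly (pderiv q) w + (w - \<xi>) * poly (pderiv (pderiv q)) w"
    unfolding p'_def pderiv_mult pderiv_lin pderiv_add by (simp add: algebra_simps)
  have wx: "w - \<xi> = - 1 / g w" using F gw by (auto simp: field_simps add_eq_0_iff)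
  have "poly (pderiv p') w = poly q w * ((g w)^2 + (\<Sum>i\<in>I. 1/(w - a i)^2)) / g w"
    unfolding pdd q2 qd[OF w] wx using gw by (simp add: field_simps power2_eq_square)
  then have p2: "poly (pderiv p') w \<noteq> 0" using qnz[OF w] nz gw by simp
  have p1: "poly p' w = 0" unfolding p'_def 1[OF w] F by simp
  have pnz: "p' \<noteq> 0" using p2 by auto
  have "order w p' = Suc (order w (pderiv p'))" by (rule order_pderiv[OF pnz p1])
  moreover have "order w (pderiv p') = 0" using p2 by (simp add: order_root)
  ultimately show "order w (pderiv ([:- \<xi>, 1:] * q)) = 1" unfolding p'_def by simp
qed



lemma msupp_null:
  assumes P: "prob_space \<mu>" and S: "sets \<mu> = sets borel"
  shows "- msupp \<mu> \<in> null_sets \<mu>"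
proof -
  interpret prob_space \<mu> by (rule P)
  define F where "F = {B. open B \<and> measure \<mu> B = 0}"
  have Fo: "\<And>B. B \<in> F \<Longrightarrow> open B" unfolding F_def by simp
  obtain F' where F': "F' \<subseteq> F" "countable F'" "\<Union>F' = \<Union>F" using Lindelof[OF Fo] by metis
  have sb: "B \<in> sets \<mu>" if "B \<in> F" for B
  proof -
    have "open B" using that Fo by blast
    then show ?thesis using S by simp
  qed
  have eq: "\<Union>F = - msupp \<mu>"
  proof (intro equalityI subsetI)
    fix x assume "x \<in> \<Union>F"
    then obtain B where B: "B \<in> F" "x \<in> B" by blast
    have Bo: "open B" and B0: "measure \<mu> B = 0" using B(1) unfolding F_def by auto
    obtain e where e: "e > 0" "ball x e \<subseteq> B" using Bo B(2) open_contains_ball by blast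
    show "x \<in> - msupp \<mu>"
    proof
      assume "x \<in> msupp \<mu>"
      then have pos: "measure \<mu> (ball x e) > 0" unfolding msupp_def using e(1) by blast
      have "measure \<mu> (ball x e) \<le> measure \<mu> B"
        using e(2) sb[OF B(1)] by (rule finite_measure_mono)
      then show False using pos B0 by simp
    qed
  next
    fix x assume "x \<in> - msupp \<mu>"
    then obtain e where e: "e > 0" "\<not> measure \<mu> (ball x e) > 0" unfolding msupp_def by auto
    then have "measure \<mu> (ball x e) = 0" using measure_nonneg[of \<mu> "ball x e"] by linarith
    then have "ball x e \<in> F" unfolding F_def by simp
    then show "x \<in> \<Union>F" using e(1) by (meson UnionI centre_in_ball)
  qed
  have "(\<Union>B\<in>F'. B) \<in> null_sets \<mu>"
  proof (rule null_sets_UN'[OF F'(2)])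
    fix B assume "B \<in> F'"
    then have B: "B \<in> F" using F'(1) by blast
    then have "B \<in> sets \<mu>" by (rule sb)
    moreover have "measure \<mu> B = 0" using B unfolding F_def by simp
    ultimately show "B \<in> null_sets \<mu>" by (simp add: emeasure_eq_measure null_sets_def)
  qed
  then show ?thesis using F'(3) eq by simp
qed



lemma slln_real:
  fixes Y :: "nat \<Rightarrow> 'a \<Rightarrow> real"
  assumes P: "prob_space M"
    and meas: "\<And>i. Y i \<in> borel_measurable M"
    and ind: "prob_space.indep_vars M (\<lambda>_. borel) Y UNIV"
    and bnd: "\<And>i x. x \<in> space M \<Longrightarrow> \<bar>Y i x\<bar> \<le> B"
    and ex: "\<And>i. prob_space.expectation M (Y i) = E"
    and t: "t > 0"
  shows "AE x in M. eventually (\<lambda>N. \<bar>(\<Sum>i\<in>{1..N}. Y i x) - real N * E\<bar> < real N * t) sequentially"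
proof -
  interpret prob_space M by (rule P)
  define B' where "B' = \<bar>B\<bar> + 1"
  have B': "B' > 0" unfolding B'_def by simp
  define c where "c = t^2 / (2 * B'^2)"
  have c: "c > 0" unfolding c_def using t B' by simp
  define A where "A = (\<lambda>N. {x\<in>space M. \<bar>(\<Sum>i\<in>{1..N}. Y i x) - real N * E\<bar> \<ge> real N * t})"
  have Am: "A N \<in> sets M" for N
  proof -
    have [measurable]: "Y i \<in> borel_measurable M" for i by (rule meas)
    show ?thesis unfolding A_def by measurable
  qed
  have Abound: "measure M (A N) \<le> 2 * exp (-c) ^ N" for N
  proof (cases "N = 0")
    case True
    have "measure M (A N) \<le> 1" by (rule prob_le_1)
    moreover have "2 * exp (-c) ^ N = 2" using True by simp
    ultimately show ?thesis by linarith
  next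
    case False
    interpret H: Hoeffding_ineq M "{1..N}" Y "\<lambda>_. -B'" "\<lambda>_. B'" "\<Sum>i\<in>{1..N}. expectation (Y i)"
    proof unfold_locales
      show "indep_vars (\<lambda>_. borel) Y {1..N}" using indep_vars_subset[OF ind] by auto
      fix i show "AE x in M. Y i x \<in> {-B'..B'}"
      proof (intro AE_I2)
        fix x assume "x \<in> space M"
        then have "\<bar>Y i x\<bar> \<le> B" by (rule bnd)
        then show "Y i x \<in> {-B'..B'}" unfolding B'_def by auto
      qed
    qed auto
    have sumex: "(\<Sum>i\<in>{1..N}. expectation (Y i)) = real N * E" using ex by simp
    have "measure M (A N) \<le> 2 * exp (-2 * (real N * t)\<^sup>2 / (\<Sum>i\<in>{1..N}. (B' - - B')\<^sup>2))"
    proof -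
      have "(\<Sum>i\<in>{1..N}. (B' - - B')\<^sup>2) > 0" using False B' by (simp add: sum_pos)
      then have "prob {x\<in>space M. \<bar>(\<Sum>i\<in>{1..N}. Y i x) - (\<Sum>i\<in>{1..N}. expectation (Y i))\<bar> \<ge> real N * t}
          \<le> 2 * exp (-2 * (real N * t)\<^sup>2 / (\<Sum>i\<in>{1..N}. (B' - - B')\<^sup>2))"
        using t by (intro H.Hoeffding_ineq_abs_ge) auto
      then show ?thesis unfolding A_def sumex .
    qed
    also have "(-2 * (real N * t)\<^sup>2 / (\<Sum>i\<in>{1..N}. (B' - - B')\<^sup>2)) = - c * N"
      using False B' unfolding c_def by (simp add: field_simps power2_eq_square)
    also have "exp (- c * N) = exp (-c) ^ N" by (simp add: exp_of_nat_mult[symmetric] mult.commute)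
    finally show ?thesis .
  qed
  have "summable (\<lambda>N. 2 * exp (-c) ^ N)"
    using c by (intro summable_mult summable_geometric) auto
  then have summ: "summable (\<lambda>N. measure M (A N))"
    by (rule summable_comparison_test'[where N=0]) (use Abound in auto)
  have "AE x in M. eventually (\<lambda>N. x \<in> space M - A N) sequentially"
    by (rule borel_cantelli_AE1[OF Am]) (auto simp: summ emeasure_eq_measure)
  then show ?thesis
    by eventually_elim (auto simp: A_def elim!: eventually_mono)
qed



lemma cslln:
  fixes M :: "'a measure" and X :: "nat \<Rightarrow> 'a \<Rightarrow> complex" and h :: "complex \<Rightarrow> complex"
  assumes P: "prob_space M"
    and Xm: "\<And>j. X j \<in> borel_measurable M"
    and ind: "prob_space.indep_vars M (\<lambda>_. borel) X UNIV"
    and dX: "\<And>j. distr M borel (X j) = \<mu>"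
    and hm: "h \<in> borel_measurable borel"
    and hb: "\<And>x. cmod (h x) \<le> B"
    and t: "t > 0"
  shows "AE \<omega> in M. eventually (\<lambda>N. cmod ((\<Sum>j\<in>{1..N}. h (X j \<omega>)) - real N * integral\<^sup>L \<mu> h) < real N * t) sequentially"
proof -
  interpret prob_space M by (rule P)
  have ex: "expectation (\<lambda>\<omega>. f (h (X i \<omega>))) = integral\<^sup>L \<mu> (\<lambda>x. f (h x))"
    if "f \<in> borel_measurable borel" for f :: "complex \<Rightarrow> real" and i
  proof -
    have "integral\<^sup>L (distr M borel (X i)) (\<lambda>x. f (h x)) = expectation (\<lambda>\<omega>. f (h (X i \<omega>)))"
      by (rule integral_distr) (use Xm that hm in auto)
    then show ?thesis using dX by simp
  qed
  have smu: "sets \<mu> = sets borel" using dX[of 0] by (metis sets_distr)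
  have Pmu: "prob_space \<mu>" using dX[of 0] prob_space_distr[OF Xm[of 0]] by simp
  have hint: "integrable \<mu> h"
  proof -
    interpret mu: prob_space \<mu> by (rule Pmu)
    have "h \<in> borel_measurable \<mu>" using hm measurable_cong_sets[OF smu refl] by blast
    then show ?thesis using hb by (intro mu.integrable_const_bound[where B=B]) auto
  qed
  have indc: "indep_vars (\<lambda>_. borel) (\<lambda>i \<omega>. f (h (X i \<omega>))) UNIV" if "f \<in> borel_measurable borel" for f :: "complex \<Rightarrow> real"
    using indep_vars_compose2[OF ind, of "\<lambda>_ x. f (h x)" "\<lambda>_. borel"] that hm by auto
  have "AE \<omega> in M. eventually (\<lambda>N. \<bar>(\<Sum>j\<in>{1..N}. Re (h (X j \<omega>))) - real N * integral\<^sup>L \<mu> (\<lambda>x. Re (h x))\<bar> < real N * (t/2)) sequentially"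
  proof (rule slln_real[OF P])
    show "prob_space.expectation M (\<lambda>\<omega>. Re (h (X i \<omega>))) = integral\<^sup>L \<mu> (\<lambda>x. Re (h x))" for i
      by (rule ex) simp
    show "prob_space.indep_vars M (\<lambda>_. borel) (\<lambda>i \<omega>. Re (h (X i \<omega>))) UNIV" by (rule indc) simp
    show "(\<lambda>\<omega>. Re (h (X i \<omega>))) \<in> borel_measurable M" for i using Xm hm by measurable
    show "\<bar>Re (h (X i x))\<bar> \<le> B" for i x using hb abs_Re_le_cmod order_trans by blast
  qed (use t in auto)
  moreover have "AE \<omega> in M. eventually (\<lambda>N. \<bar>(\<Sum>j\<in>{1..N}. Im (h (X j \<omega>))) - real N * integral\<^sup>L \<mu> (\<lambda>x. Im (h x))\<bar> < real N * (t/2)) sequentially"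
  proof (rule slln_real[OF P])
    show "prob_space.expectation M (\<lambda>\<omega>. Im (h (X i \<omega>))) = integral\<^sup>L \<mu> (\<lambda>x. Im (h x))" for i
      by (rule ex) simp
    show "prob_space.indep_vars M (\<lambda>_. borel) (\<lambda>i \<omega>. Im (h (X i \<omega>))) UNIV" by (rule indc) simp
    show "(\<lambda>\<omega>. Im (h (X i \<omega>))) \<in> borel_measurable M" for i using Xm hm by measurable
    show "\<bar>Im (h (X i x))\<bar> \<le> B" for i x using hb abs_Im_le_cmod order_trans by blast
  qed (use t in auto)
  ultimately show ?thesis
  proof eventually_elim
    case (elim \<omega>)
    from elim(1,2) show ?case
    proof eventually_elim
      case (elim N)
      define d where "d = (\<Sum>j\<in>{1..N}. h (X j \<omega>)) - real N * integral\<^sup>L \<mu> h"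
      have "Re d = (\<Sum>j\<in>{1..N}. Re (h (X j \<omega>))) - real N * integral\<^sup>L \<mu> (\<lambda>x. Re (h x))"
        unfolding d_def using hint by simp
      moreover have "Im d = (\<Sum>j\<in>{1..N}. Im (h (X j \<omega>))) - real N * integral\<^sup>L \<mu> (\<lambda>x. Im (h x))"
        unfolding d_def using hint by simp
      ultimately have "\<bar>Re d\<bar> + \<bar>Im d\<bar> < real N * t" using elim by simp
      then show ?case using cmod_le[of d] unfolding d_def by linarith
    qed
  qed
qed



lemma AE_in_supp:
  fixes M :: "'a measure" and X :: "nat \<Rightarrow> 'a \<Rightarrow> complex"
  assumes P: "prob_space M"
    and Xm: "\<And>j. X j \<in> borel_measurable M"
    and dX: "\<And>j. distr M borel (X j) = \<mu>"
    and cl: "closed (msupp \<mu>)"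
  shows "AE \<omega> in M. \<forall>j. X j \<omega> \<in> msupp \<mu>"
proof -
  have smu: "sets \<mu> = sets borel" using dX[of 0] by (metis sets_distr)
  have Pmu: "prob_space \<mu>" using dX[of 0] prob_space.prob_space_distr[OF P Xm[of 0]] by simp
  have ae: "AE x in \<mu>. x \<in> msupp \<mu>"
    by (rule AE_I'[OF msupp_null[OF Pmu smu]]) auto
  have "AE x in distr M borel (X j). x \<in> msupp \<mu>" for j unfolding dX by (rule ae)
  then have "AE \<omega> in M. X j \<omega> \<in> msupp \<mu>" for j
    using AE_distr_iff[OF Xm[of j], of "\<lambda>x. x \<in> msupp \<mu>"] cl by (simp add: borel_closed)
  then show ?thesis by (simp add: AE_all_countable)
qed

lemma cst_eq_int:
  assumes Pmu: "prob_space \<mu>" and smu: "sets \<mu> = sets borel" and cl: "closed (msupp \<mu>)"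
  shows "cst \<mu> z = integral\<^sup>L \<mu> (\<lambda>x. if x \<in> msupp \<mu> then 1 / (z - x) else 0)"
  unfolding cst_def
proof (rule integral_cong_AE)
  have m1: "(\<lambda>x. 1 / (z - x)) \<in> borel_measurable borel" by measurable
  then show "(\<lambda>x. 1 / (z - x)) \<in> borel_measurable \<mu>" using measurable_cong_sets[OF smu refl] by blast
  have "(\<lambda>x. if x \<in> msupp \<mu> then 1 / (z - x) else 0) \<in> borel_measurable borel"
    by (rule measurable_If_set[OF m1]) (use cl in \<open>auto simp: borel_closed\<close>)
  then show "(\<lambda>x. if x \<in> msupp \<mu> then 1 / (z - x) else 0) \<in> borel_measurable \<mu>"
    using measurable_cong_sets[OF smu refl] by blast
  have "AE x in \<mu>. x \<in> msupp \<mu>"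
    by (rule AE_I'[OF msupp_null[OF Pmu smu]]) auto
  then show "AE x in \<mu>. 1 / (z - x) = (if x \<in> msupp \<mu> then 1 / (z - x) else 0)"
    by eventually_elim auto
qed

lemma sum_diff_bound2:
  fixes a :: "'b \<Rightarrow> complex"
  assumes fin: "finite I" and d: "d > 0"
    and hz: "\<forall>i\<in>I. d \<le> cmod (z - a i) \<and> d \<le> cmod (z' - a i)"
  shows "cmod ((\<Sum>i\<in>I. 1/(z - a i)) - (\<Sum>i\<in>I. 1/(z' - a i))) \<le> cmod (z - z') * card I / d^2"
proof -
  have "(\<Sum>i\<in>I. 1/(z - a i)) - (\<Sum>i\<in>I. 1/(z' - a i)) = (\<Sum>i\<in>I. (z' - z) / ((z - a i) * (z' - a i)))"
  proof -
    have "1/(z - a i) - 1/(z' - a i) = (z' - z) / ((z - a i) * (z' - a i))" if "i \<in> I" for i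
    proof -
      have "z - a i \<noteq> 0" "z' - a i \<noteq> 0" using hz that d by auto
      then show ?thesis by (simp add: field_simps)
    qed
    then show ?thesis by (simp add: sum_subtractf[symmetric])
  qed
  also have "cmod \<dots> \<le> (\<Sum>i\<in>I. cmod ((z' - z) / ((z - a i) * (z' - a i))))"
    by (rule norm_sum)
  also have "\<dots> \<le> (\<Sum>i\<in>I. cmod (z - z') / (d * d))"
  proof (rule sum_mono)
    fix i assume i: "i \<in> I"
    have "cmod ((z' - z) / ((z - a i) * (z' - a i))) = cmod (z - z') / (cmod (z - a i) * cmod (z' - a i))"
      by (simp add: norm_divide norm_mult norm_minus_commute)
    also have "\<dots> \<le> cmod (z - z') / (d * d)"
      using hz i d by (intro divide_left_mono mult_mono mult_pos_pos) (auto simp: mult_le_0_iff)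
    finally show "cmod ((z' - z) / ((z - a i) * (z' - a i))) \<le> cmod (z - z') / (d * d)" .
  qed
  also have "\<dots> = cmod (z - z') * card I / d^2" by (simp add: power2_eq_square)
  finally show ?thesis .
qed



lemma LB:
  fixes M :: "'a measure" and X :: "nat \<Rightarrow> 'a \<Rightarrow> complex" and V :: "complex set"
  assumes P: "prob_space M"
    and Xm: "\<And>j. X j \<in> borel_measurable M"
    and ind: "prob_space.indep_vars M (\<lambda>_. borel) X UNIV"
    and dX: "\<And>j. distr M borel (X j) = \<mu>"
    and cl: "closed (msupp \<mu>)"
    and V: "compact V" and eps: "\<epsilon> > 0"
    and Vd: "\<forall>z\<in>V. \<forall>x\<in>msupp \<mu>. 2*\<epsilon> \<le> dist z x"
    and Vm: "\<forall>z\<in>V. cst \<mu> z \<noteq> 0"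
  shows "\<exists>c>0. AE \<omega> in M. eventually (\<lambda>N. \<forall>z\<in>V. c * real N \<le> cmod (\<Sum>j\<in>{1..N}. 1/(z - X j \<omega>))) sequentially"
proof -
  define S where "S = msupp \<mu>"
  have smu: "sets \<mu> = sets borel" using dX[of 0] by (metis sets_distr)
  have Pmu: "prob_space \<mu>" using dX[of 0] prob_space.prob_space_distr[OF P Xm[of 0]] by simp
  define hh where "hh = (\<lambda>z x. if x \<in> S then 1 / (z - x) else 0)"
  have hhm: "hh z \<in> borel_measurable borel" for z
  proof -
    have m1: "(\<lambda>x. 1 / (z - x)) \<in> borel_measurable borel" by measurable
    show ?thesis unfolding hh_def
      by (rule measurable_If_set[OF m1]) (use cl in \<open>auto simp: borel_closed S_def\<close>)
  qed
  have hhb: "cmod (hh z x) \<le> 1 / (2*\<epsilon>)" if "z \<in> V" for z x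
  proof (cases "x \<in> S")
    case True
    then have "2*\<epsilon> \<le> cmod (z - x)" using Vd that unfolding S_def by (auto simp: dist_norm)
    then show ?thesis unfolding hh_def using True eps by (simp add: norm_divide divide_simps)
  next
    case False then show ?thesis unfolding hh_def using eps by simp
  qed
  have hhint: "integral\<^sup>L \<mu> (hh z) = cst \<mu> z" for z
    unfolding hh_def S_def using cst_eq_int[OF Pmu smu cl] by simp
  define r where "r = (\<lambda>z. cmod (cst \<mu> z) * \<epsilon>^2)"
  have rpos: "r z > 0" if "z \<in> V" for z using Vm that eps unfolding r_def by auto
  have "V \<subseteq> (\<Union>z\<in>V. ball z (r z))" using rpos by auto
  then obtain F0 where F0: "F0 \<subseteq> V" "finite F0" "V \<subseteq> (\<Union>z\<in>F0. ball z (r z))"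
    using compactE_image[OF V, of V "\<lambda>z. ball z (r z)"] by auto
  define c where "c = (if F0 = {} then 1 else Min ((\<lambda>z. cmod (cst \<mu> z) / 2) ` F0))"
  have cpos: "c > 0"
    unfolding c_def using F0 Vm by (auto simp: Min_gr_iff)
  have cle: "c \<le> cmod (cst \<mu> z) / 2" if "z \<in> F0" for z
  proof -
    have "F0 \<noteq> {}" using that by auto
    moreover have "Min ((\<lambda>z. cmod (cst \<mu> z) / 2) ` F0) \<le> cmod (cst \<mu> z) / 2"
      by (rule Min_le) (use F0(2) that in auto)
    ultimately show ?thesis unfolding c_def by simp
  qed
  have G0: "AE \<omega> in M. \<forall>j. X j \<omega> \<in> S"
    unfolding S_def by (rule AE_in_supp[OF P Xm dX cl])
  have G1: "AE \<omega> in M. \<forall>z\<in>F0. eventually (\<lambda>N. cmod ((\<Sum>j\<in>{1..N}. hh z (X j \<omega>)) - real N * cst \<mu> z) < real N * (cmod (cst \<mu> z) / 4)) sequentially"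
  proof (subst AE_ball_countable)
    show "countable F0" using F0(2) by (rule countable_finite)
    show "\<forall>z\<in>F0. AE \<omega> in M. eventually (\<lambda>N. cmod ((\<Sum>j\<in>{1..N}. hh z (X j \<omega>)) - real N * cst \<mu> z) < real N * (cmod (cst \<mu> z) / 4)) sequentially"
    proof
      fix z assume z: "z \<in> F0"
      then have zV: "z \<in> V" using F0 by auto
      show "AE \<omega> in M. eventually (\<lambda>N. cmod ((\<Sum>j\<in>{1..N}. hh z (X j \<omega>)) - real N * cst \<mu> z) < real N * (cmod (cst \<mu> z) / 4)) sequentially"
        using cslln[OF P Xm ind dX hhm[of z] hhb[OF zV], of "cmod (cst \<mu> z) / 4"] Vm zV
        unfolding hhint by auto
    qed
  qed
  show ?thesis
  proof (intro exI conjI)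
    show "c > 0" by (rule cpos)
    from G0 G1 show "AE \<omega> in M. eventually (\<lambda>N. \<forall>z\<in>V. c * real N \<le> cmod (\<Sum>j\<in>{1..N}. 1/(z - X j \<omega>))) sequentially"
    proof eventually_elim
      case (elim \<omega>)
      note G0w = elim(1)
      have "eventually (\<lambda>N. \<forall>z\<in>F0. cmod ((\<Sum>j\<in>{1..N}. hh z (X j \<omega>)) - real N * cst \<mu> z) < real N * (cmod (cst \<mu> z) / 4)) sequentially"
        using elim(2) F0(2) by (intro eventually_ball_finite) auto
      then show ?case
      proof eventually_elim
        case (elim N)
        show ?case
        proof
          fix z assume zV: "z \<in> V"
          then obtain z0 where z0: "z0 \<in> F0" "z \<in> ball z0 (r z0)" using F0(3) by auto
          have z0V: "z0 \<in> V" using z0 F0 by auto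
          define m0 where "m0 = cmod (cst \<mu> z0)"
          have hsum: "(\<Sum>j\<in>{1..N}. hh z0 (X j \<omega>)) = (\<Sum>j\<in>{1..N}. 1/(z0 - X j \<omega>))"
            unfolding hh_def using G0w by simp
          have e1: "cmod ((\<Sum>j\<in>{1..N}. 1/(z0 - X j \<omega>)) - real N * cst \<mu> z0) \<le> real N * (m0 / 4)"
          proof -
            have "cmod ((\<Sum>j\<in>{1..N}. hh z0 (X j \<omega>)) - real N * cst \<mu> z0) < real N * (m0 / 4)"
              using elim z0(1) unfolding m0_def by blast
            then show ?thesis unfolding hsum by simp
          qed
          have "real N * m0 = cmod (real N * cst \<mu> z0)" unfolding m0_def by (simp add: norm_mult)
          also have "\<dots> \<le> cmod (\<Sum>j\<in>{1..N}. 1/(z0 - X j \<omega>)) + cmod ((\<Sum>j\<in>{1..N}. 1/(z0 - X j \<omega>)) - real N * cst \<mu> z0)"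
            using norm_triangle_ineq2[of "real N * cst \<mu> z0" "\<Sum>j\<in>{1..N}. 1/(z0 - X j \<omega>)"]
              norm_minus_commute[of "real N * cst \<mu> z0" "\<Sum>j\<in>{1..N}. 1/(z0 - X j \<omega>)"] by linarith
          finally have e2: "real N * m0 - real N * (m0/4) \<le> cmod (\<Sum>j\<in>{1..N}. 1/(z0 - X j \<omega>))" using e1 by linarith
          have dd: "\<forall>j\<in>{1..N}. 2*\<epsilon> \<le> cmod (z - X j \<omega>) \<and> 2*\<epsilon> \<le> cmod (z0 - X j \<omega>)"
            using Vd zV z0V G0w unfolding S_def by (auto simp: dist_norm)
          have "cmod ((\<Sum>j\<in>{1..N}. 1/(z - X j \<omega>)) - (\<Sum>j\<in>{1..N}. 1/(z0 - X j \<omega>))) \<le> cmod (z - z0) * card {1..N} / (2*\<epsilon>)^2"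
            by (rule sum_diff_bound2) (use eps dd in auto)
          also have "\<dots> \<le> r z0 * real N / (2*\<epsilon>)^2"
          proof -
            have "cmod (z - z0) \<le> r z0" using z0(2) by (simp add: dist_norm norm_minus_commute)
            then have "cmod (z - z0) * real N \<le> r z0 * real N" by (rule mult_right_mono) simp
            then show ?thesis using eps by (intro divide_right_mono) auto
          qed
          also have "\<dots> = real N * (m0 / 4)" unfolding r_def m0_def using eps by (simp add: field_simps power2_eq_square)
          finally have e3: "cmod ((\<Sum>j\<in>{1..N}. 1/(z - X j \<omega>)) - (\<Sum>j\<in>{1..N}. 1/(z0 - X j \<omega>))) \<le> real N * (m0 / 4)" .
          have "cmod (\<Sum>j\<in>{1..N}. 1/(z0 - X j \<omega>)) \<le> cmod (\<Sum>j\<in>{1..N}. 1/(z - X j \<omega>)) + cmod ((\<Sum>j\<in>{1..N}. 1/(z - X j \<omega>)) - (\<Sum>j\<in>{1..N}. 1/(z0 - X j \<omega>)))"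
            using norm_triangle_ineq2[of "\<Sum>j\<in>{1..N}. 1/(z0 - X j \<omega>)" "\<Sum>j\<in>{1..N}. 1/(z - X j \<omega>)"]
              norm_minus_commute[of "\<Sum>j\<in>{1..N}. 1/(z0 - X j \<omega>)" "\<Sum>j\<in>{1..N}. 1/(z - X j \<omega>)"] by linarith
          with e2 e3 have "real N * (m0 / 2) \<le> cmod (\<Sum>j\<in>{1..N}. 1/(z - X j \<omega>))" by linarith
          moreover have "c * real N \<le> real N * (m0 / 2)" using cle[OF z0(1)] unfolding m0_def
            by (metis mult.commute mult_left_mono of_nat_0_le_iff)
          ultimately show "c * real N \<le> cmod (\<Sum>j\<in>{1..N}. 1/(z - X j \<omega>))" by linarith
        qed
      qed
    qed
  qed
qed



lemma infdist_lower:
  fixes A :: "complex set"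
  assumes "A \<noteq> {}" "\<forall>a\<in>A. cmod a \<le> B"
  shows "cmod x - B \<le> infdist x A"
proof -
  have "cmod x - B \<le> (INF a\<in>A. dist x a)"
  proof (rule cINF_greatest[OF assms(1)])
    fix a assume "a \<in> A"
    then have "cmod a \<le> B" using assms by auto
    moreover have "cmod x - cmod a \<le> dist x a" by (simp add: dist_norm norm_triangle_ineq2)
    ultimately show "cmod x - B \<le> dist x a" by linarith
  qed
  then show ?thesis using infdist_notempty[OF assms(1)] by simp
qed

lemma kap_lemma:
  fixes \<epsilon> B t :: real
  assumes "\<epsilon> > 0" "B \<ge> 0" "\<epsilon> \<le> t" "cmod z - B \<le> t"
  shows "\<epsilon> * (1 + cmod z) / (1 + B + \<epsilon>) \<le> t"
proof -
  have "\<epsilon> * (1 + cmod z) \<le> t * (1 + B + \<epsilon>)"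
  proof (cases "cmod z \<le> B + \<epsilon>")
    case True
    then have "\<epsilon> * (1 + cmod z) \<le> \<epsilon> * (1 + B + \<epsilon>)" using assms by (intro mult_left_mono) auto
    also have "\<dots> \<le> t * (1 + B + \<epsilon>)" using assms by (intro mult_right_mono) auto
    finally show ?thesis .
  next
    case False
    have "\<epsilon> * (1 + cmod z) \<le> (cmod z - B) * (1 + B + \<epsilon>)"
    proof -
      have "(cmod z - B) * (1 + B + \<epsilon>) - \<epsilon> * (1 + cmod z) = (cmod z - B - \<epsilon>) * (1 + B)"
        by (simp add: algebra_simps)
      also have "\<dots> \<ge> 0" using False assms by auto
      finally show ?thesis by simp
    qed
    also have "\<dots> \<le> t * (1 + B + \<epsilon>)" using assms by (intro mult_right_mono) auto
    finally show ?thesis .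
  qed
  then show ?thesis using assms by (simp add: divide_le_eq)
qed

lemma far_bound:
  fixes x :: "nat \<Rightarrow> complex"
  assumes "\<forall>j\<in>{1..N}. cmod (x j) \<le> BS" "BS \<ge> 0" "cmod z \<ge> 3*BS + 1"
  shows "real N / (2 * cmod z) \<le> cmod (\<Sum>j\<in>{1..N}. 1/(z - x j))"
proof -
  have zpos: "cmod z > 0" using assms by linarith
  have nz: "z - x j \<noteq> 0" if "j \<in> {1..N}" for j
  proof
    assume "z - x j = 0"
    then have "cmod z = cmod (x j)" by simp
    then show False using assms that by fastforce
  qed
  have "z * (\<Sum>j\<in>{1..N}. 1/(z - x j)) = (\<Sum>j\<in>{1..N}. 1 + x j / (z - x j))"
    unfolding sum_distrib_left
  proof (rule sum.cong[OF refl])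
    fix j assume j: "j \<in> {1..N}"
    show "z * (1 / (z - x j)) = 1 + x j / (z - x j)" using nz[OF j] by (simp add: field_simps)
  qed
  also have "\<dots> = of_nat N + (\<Sum>j\<in>{1..N}. x j / (z - x j))" by (simp add: sum.distrib)
  finally have eq: "z * (\<Sum>j\<in>{1..N}. 1/(z - x j)) = of_nat N + (\<Sum>j\<in>{1..N}. x j / (z - x j))" .
  have "cmod (\<Sum>j\<in>{1..N}. x j / (z - x j)) \<le> (\<Sum>j\<in>{1..N}. 1/2)"
  proof (rule order_trans[OF norm_sum sum_mono])
    fix j assume j: "j \<in> {1..N}"
    have xj: "cmod (x j) \<le> BS" using assms j by auto
    have "cmod z - cmod (x j) \<le> cmod (z - x j)" by (rule norm_triangle_ineq2)
    then have d: "2 * BS \<le> cmod (z - x j)" "cmod (z - x j) > 0" using xj assms by linarith+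
    have "cmod (x j / (z - x j)) = cmod (x j) / cmod (z - x j)" by (simp add: norm_divide)
    also have "\<dots> \<le> 1/2"
      using xj d by (simp add: divide_le_eq)
    finally show "cmod (x j / (z - x j)) \<le> 1/2" .
  qed
  then have "cmod (\<Sum>j\<in>{1..N}. x j / (z - x j)) \<le> real N / 2" by simp
  moreover have "real N - cmod (\<Sum>j\<in>{1..N}. x j / (z - x j)) \<le> cmod (of_nat N + (\<Sum>j\<in>{1..N}. x j / (z - x j)))"
    using norm_diff_ineq[of "of_nat N :: complex" "(\<Sum>j\<in>{1..N}. x j / (z - x j))"]
    by (simp add: norm_of_nat)
  ultimately have "real N / 2 \<le> cmod (z * (\<Sum>j\<in>{1..N}. 1/(z - x j)))"
    unfolding eq by linarith
  then have "real N / 2 \<le> cmod z * cmod (\<Sum>j\<in>{1..N}. 1/(z - x j))"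
    by (simp add: norm_mult)
  then show ?thesis using zpos by (simp add: divide_le_eq mult.commute)
qed

lemma cst_nonzero_far:
  assumes Pmu: "prob_space \<mu>" and smu: "sets \<mu> = sets borel" and cl: "closed (msupp \<mu>)"
    and BS: "\<forall>x\<in>msupp \<mu>. cmod x \<le> BS" "BS \<ge> 0" and z: "cmod z > 2 * BS"
  shows "cst \<mu> z \<noteq> 0"
proof -
  interpret prob_space \<mu> by (rule Pmu)
  define S where "S = msupp \<mu>"
  have zpos: "cmod z > 0" using z BS by linarith
  define \<beta> where "\<beta> = BS / (cmod z * (cmod z - BS))"
  have ae: "AE x in \<mu>. x \<in> S" unfolding S_def by (rule AE_I'[OF msupp_null[OF Pmu smu]]) auto
  have bnd: "AE x in \<mu>. cmod (1/(z - x) - 1/z) \<le> \<beta>"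
    using ae
  proof eventually_elim
    case (elim x)
    have xb: "cmod x \<le> BS" using elim BS unfolding S_def by auto
    have "cmod z - cmod x \<le> cmod (z - x)" by (rule norm_triangle_ineq2)
    then have d: "cmod z - BS \<le> cmod (z - x)" "cmod z - BS > 0" using xb z BS by linarith+
    have nz: "z - x \<noteq> 0" using d by auto
    have "1/(z - x) - 1/z = x / (z * (z - x))" using nz zpos by (auto simp: field_simps)
    then have "cmod (1/(z - x) - 1/z) = cmod x / (cmod z * cmod (z - x))" by (simp add: norm_divide norm_mult)
    also have "\<dots> \<le> BS / (cmod z * (cmod z - BS))"
      using xb d zpos BS(2) by (intro frac_le mult_left_mono mult_pos_pos) auto
    finally show ?case unfolding \<beta>_def .
  qed
  have m1: "(\<lambda>x. 1 / (z - x)) \<in> borel_measurable \<mu>"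
  proof -
    have "(\<lambda>x. 1 / (z - x)) \<in> borel_measurable borel" by measurable
    then show ?thesis using measurable_cong_sets[OF smu refl] by blast
  qed
  have bnd2: "AE x in \<mu>. cmod (1/(z - x)) \<le> \<beta> + cmod (1/z)"
    using bnd by eventually_elim (metis add.commute diff_add_cancel norm_triangle_ineq order_trans add_right_mono)
  have int1: "integrable \<mu> (\<lambda>x. 1 / (z - x))"
    by (rule integrable_const_bound[OF bnd2 m1])
  have int2: "integrable \<mu> (\<lambda>x. 1/(z - x) - 1/z)" using int1 by simp
  have "cst \<mu> z - 1/z = integral\<^sup>L \<mu> (\<lambda>x. 1/(z - x) - 1/z)"
    unfolding cst_def using int1 by (simp add: prob_space)
  then have "cmod (cst \<mu> z - 1/z) \<le> integral\<^sup>L \<mu> (\<lambda>x. cmod (1/(z - x) - 1/z))"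
    using integral_norm_bound by metis
  also have "\<dots> \<le> \<beta>" by (rule integral_le_const) (use int2 bnd in auto)
  also have "\<beta> < 1 / cmod z"
  proof -
    have "BS < cmod z - BS" using z by linarith
    then have lt1: "BS / (cmod z - BS) < 1" using z BS by (simp add: divide_less_eq)
    have "\<beta> = (BS / (cmod z - BS)) * (1 / cmod z)" unfolding \<beta>_def by simp
    also have "\<dots> < 1 * (1 / cmod z)"
      using lt1 zpos by (intro mult_strict_right_mono) auto
    finally show ?thesis by simp
  qed
  finally have "cmod (cst \<mu> z - 1/z) < cmod (1/z)" by (simp add: norm_divide)
  then show ?thesis by auto
qed

lemma pn_split:
  assumes "k \<ge> 1"
  shows "pn x k xi n = [:- xi 1, 1:] * (\<Prod>i\<in>{1..n-k} <+> {2..k}. [:- case_sum x xi i, 1:])"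
proof -
  have "{1..k} = insert 1 {2..k}" using assms by auto
  then have a: "(\<Prod>l\<in>{1..k}. [:- xi l, 1:]) = [:- xi 1, 1:] * (\<Prod>l\<in>{2..k}. [:- xi l, 1:])" by simp
  have b: "(\<Prod>i\<in>{1..n-k} <+> {2..k}. [:- case_sum x xi i, 1:]) = (\<Prod>j\<in>{1..n-k}. [:- x j, 1:]) * (\<Prod>l\<in>{2..k}. [:- xi l, 1:])"
    by (subst prod.Plus) (auto simp: comp_def)
  show ?thesis unfolding pn_def a b by (simp only: mult_ac)
qed



lemma step:
  fixes x :: "nat \<Rightarrow> complex" and xi :: "nat \<Rightarrow> complex" and A :: "complex set"
    and K N k n :: nat and \<epsilon> BA c :: real
  defines "\<kappa> \<equiv> \<epsilon> / (1 + (BA + \<epsilon>) + \<epsilon>)"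
  defines "\<kappa>' \<equiv> \<epsilon> / (1 + (BA + 2*\<epsilon>) + \<epsilon>)"
  assumes eps: "\<epsilon> > 0" and c: "c > 0" and BA: "BA \<ge> 0"
    and Ane: "A \<noteq> {}" and Ab: "\<forall>a\<in>A. cmod a \<le> BA"
    and xA: "\<forall>j\<in>{1..N}. x j \<in> A"
    and LBz: "\<forall>z. 2*\<epsilon> \<le> infdist z A \<longrightarrow> c * real N / (1 + cmod z) \<le> cmod (\<Sum>j\<in>{1..N}. 1/(z - x j))"
    and k: "1 \<le> k" "k \<le> K" "n = N + k"
    and N1: "real N \<ge> real K" and N2: "real N \<ge> 2 * K / (\<kappa> * c)" and N3: "real N \<ge> 16 / (\<kappa>^2 * c^2)"
    and N4: "real N \<ge> 4 / c" and N5: "real N \<ge> 4 / (c * \<kappa>')"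
    and xi1: "3*\<epsilon> \<le> infdist (xi 1) A"
    and xil: "\<forall>l\<in>{2..k}. infdist (xi l) A < \<epsilon>"
  shows "\<exists>w. {z. poly (pderiv (pn x k xi n)) z = 0 \<and> \<not> infdist z A < 2*\<epsilon>} = {w}
            \<and> order w (pderiv (pn x k xi n)) = 1
            \<and> cmod (w - xi 1) \<le> (8/c) / real n * (1 + cmod (xi 1))"
proof -
  define B where "B = BA + \<epsilon>"
  define U where "U = {z. 2*\<epsilon> \<le> infdist z A}"
  define I where "I = {1..N} <+> {2..k}"
  define a where "a = case_sum x xi"
  define \<xi> where "\<xi> = xi 1"
  define W0 where "W0 = 1 + cmod \<xi>"
  define lam where "lam = c * real N - K / \<kappa>"
  have kap: "\<kappa> > 0" unfolding \<kappa>_def using eps BA by auto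
  have kap': "\<kappa>' > 0" unfolding \<kappa>'_def using eps BA by auto
  have B: "B \<ge> 0" unfolding B_def using eps BA by auto
  have finI: "finite I" unfolding I_def by simp
  have cardI: "card I \<le> n" unfolding I_def using k by (simp add: card_Plus)
  have Wpos: "1 + cmod z > 0" for z :: complex by (auto intro: add_pos_nonneg)
  have H1: "\<forall>z\<in>U. \<forall>i\<in>I. \<kappa> * (1 + cmod z) \<le> cmod (z - a i)"
  proof (intro ballI)
    fix z i assume z: "z \<in> U" and i: "i \<in> I"
    have zA: "2*\<epsilon> \<le> infdist z A" using z unfolding U_def by simp
    have "\<epsilon> \<le> cmod (z - a i) \<and> cmod (a i) \<le> B"
    proof (cases i)
      case (Inl j)
      then have j: "j \<in> {1..N}" using i unfolding I_def by auto
      have "x j \<in> A" using xA j by auto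
      then have "infdist z A \<le> cmod (z - x j)" using infdist_le[of "x j" A z] by (simp add: dist_norm)
      moreover have "cmod (x j) \<le> B" using Ab \<open>x j \<in> A\<close> eps unfolding B_def by force
      ultimately show ?thesis using zA eps Inl unfolding a_def by auto
    next
      case (Inr l)
      then have l: "l \<in> {2..k}" using i unfolding I_def by auto
      have il: "infdist (xi l) A < \<epsilon>" using xil l by auto
      have "infdist z A \<le> infdist (xi l) A + dist z (xi l)" by (rule infdist_triangle)
      then have d: "\<epsilon> \<le> cmod (z - xi l)" using il zA by (simp add: dist_norm)
      have "cmod (xi l) - BA \<le> infdist (xi l) A" by (rule infdist_lower[OF Ane Ab])
      then have "cmod (xi l) \<le> B" using il unfolding B_def by linarith
      then show ?thesis using d Inr unfolding a_def by auto
    qed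
    moreover have "cmod z - B \<le> cmod (z - a i)"
      using calculation norm_triangle_ineq2[of z "a i"] by linarith
    ultimately have "\<epsilon> * (1 + cmod z) / (1 + B + \<epsilon>) \<le> cmod (z - a i)"
      using kap_lemma[OF eps B] by blast
    then show "\<kappa> * (1 + cmod z) \<le> cmod (z - a i)" unfolding \<kappa>_def B_def by (simp add: field_simps)
  qed
  have lamN: "lam \<ge> c * real N / 2"
  proof -
    have "2 * K / (\<kappa> * c) \<le> real N" by (rule N2)
    then have "2 * K \<le> real N * (\<kappa> * c)" using kap c by (simp add: divide_le_eq)
    then have "K / \<kappa> \<le> c * real N / 2" using kap by (simp add: divide_le_eq algebra_simps)
    then show ?thesis unfolding lam_def by linarith
  qed
  have H2: "\<forall>z\<in>U. lam / (1 + cmod z) \<le> cmod (\<Sum>i\<in>I. 1/(z - a i))"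
  proof
    fix z assume z: "z \<in> U"
    define W where "W = 1 + cmod z"
    have W: "W > 0" unfolding W_def using Wpos by auto
    have split: "(\<Sum>i\<in>I. 1/(z - a i)) = (\<Sum>j\<in>{1..N}. 1/(z - x j)) + (\<Sum>l\<in>{2..k}. 1/(z - xi l))"
      unfolding I_def a_def by (subst sum.Plus) (auto simp: comp_def)
    have l1: "c * real N / W \<le> cmod (\<Sum>j\<in>{1..N}. 1/(z - x j))"
      using LBz z unfolding U_def W_def by auto
    have l2: "cmod (\<Sum>l\<in>{2..k}. 1/(z - xi l)) \<le> K / (\<kappa> * W)"
    proof -
      have "cmod (\<Sum>l\<in>{2..k}. 1/(z - xi l)) \<le> (\<Sum>l\<in>{2..k}. 1 / (\<kappa> * W))"
      proof (rule order_trans[OF norm_sum sum_mono])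
        fix l assume l: "l \<in> {2..k}"
        then have "Inr l \<in> I" unfolding I_def by auto
        then have "\<kappa> * (1 + cmod z) \<le> cmod (z - a (Inr l))" using H1 z by blast
        then have "\<kappa> * W \<le> cmod (z - xi l)" unfolding W_def a_def by simp
        moreover have "\<kappa> * W > 0" using kap W by auto
        ultimately show "cmod (1/(z - xi l)) \<le> 1 / (\<kappa> * W)"
          by (simp add: norm_divide divide_le_eq_1 frac_le)
      qed
      also have "\<dots> = real (k - 1) / (\<kappa> * W)" by simp
      also have "\<dots> \<le> K / (\<kappa> * W)" using k kap W by (intro divide_right_mono) auto
      finally show ?thesis .
    qed
    have "cmod (\<Sum>j\<in>{1..N}. 1/(z - x j)) - cmod (\<Sum>l\<in>{2..k}. 1/(z - xi l)) \<le> cmod (\<Sum>i\<in>I. 1/(z - a i))"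
      unfolding split using norm_diff_ineq by blast
    moreover have "lam / W = c * real N / W - K / (\<kappa> * W)" unfolding lam_def using kap W by (simp add: field_simps)
    ultimately show "lam / (1 + cmod z) \<le> cmod (\<Sum>i\<in>I. 1/(z - a i))" using l1 l2 unfolding W_def by linarith
  qed
  have lam2: "lam \<ge> 2"
  proof -
    have "4 / c \<le> real N" by (rule N4)
    then have "4 \<le> c * real N" using c by (simp add: divide_le_eq mult.commute)
    then show ?thesis using lamN by linarith
  qed
  have lampos: "lam > 0" using lam2 by linarith
  have H3: "cball \<xi> (2 * (1 + cmod \<xi>) / lam) \<subseteq> U"
  proof
    fix z assume z: "z \<in> cball \<xi> (2 * (1 + cmod \<xi>) / lam)"
    define t where "t = infdist \<xi> A - 2*\<epsilon>"
    have t1: "\<epsilon> \<le> t" using xi1 unfolding t_def \<xi>_def by linarith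
    have t2: "cmod \<xi> - (BA + 2*\<epsilon>) \<le> t" using infdist_lower[OF Ane Ab, of \<xi>] unfolding t_def by linarith
    have "\<epsilon> * (1 + cmod \<xi>) / (1 + (BA + 2*\<epsilon>) + \<epsilon>) \<le> t"
      by (rule kap_lemma[OF eps _ t1 t2]) (use BA eps in auto)
    then have kt: "\<kappa>' * W0 \<le> t" unfolding \<kappa>'_def W0_def by (simp add: field_simps)
    have "2 / lam \<le> \<kappa>'"
    proof -
      have "4 / (c * \<kappa>') \<le> real N" by (rule N5)
      then have "4 \<le> real N * (c * \<kappa>')" using c kap' by (simp add: divide_le_eq)
      then have "2 \<le> (c * real N / 2) * \<kappa>'" by (simp add: algebra_simps)
      also have "\<dots> \<le> lam * \<kappa>'" using lamN kap' by (intro mult_right_mono) auto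
      finally show ?thesis using lampos by (simp add: divide_le_eq mult.commute)
    qed
    then have "(2 / lam) * W0 \<le> \<kappa>' * W0" using W0_def Wpos[of \<xi>]
      by (intro mult_right_mono) auto
    then have "2 * W0 / lam \<le> \<kappa>' * W0" by simp
    then have "dist \<xi> z \<le> t" using z kt unfolding W0_def by auto
    moreover have "infdist \<xi> A \<le> infdist z A + dist \<xi> z" by (rule infdist_triangle)
    ultimately have "2*\<epsilon> \<le> infdist z A" unfolding t_def by linarith
    then show "z \<in> U" unfolding U_def by simp
  qed
  have H4: "2 * n \<le> \<kappa>^2 * lam^2"
  proof -
    have "real n \<le> 2 * real N" using k N1 by simp
    have "16 / (\<kappa>^2 * c^2) \<le> real N" by (rule N3)
    then have "16 \<le> real N * (\<kappa>^2 * c^2)" using kap c by (simp add: divide_le_eq)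
    then have "real N * 16 \<le> real N * (real N * (\<kappa>^2 * c^2))"
      by (intro mult_left_mono) auto
    then have "4 * real N * 4 \<le> real N * (real N * (\<kappa>^2 * c^2))" by simp
    then have "4 * real N \<le> \<kappa>^2 * (c * real N / 2)^2" by (simp add: power2_eq_square algebra_simps)
    also have "\<dots> \<le> \<kappa>^2 * lam^2"
      using lamN c by (intro mult_left_mono power_mono) auto
    finally show ?thesis using \<open>real n \<le> 2 * real N\<close> by linarith
  qed
  obtain w where w: "{z\<in>U. 1 + (z - \<xi>) * (\<Sum>i\<in>I. 1/(z - a i)) = 0} = {w}"
      "cmod (w - \<xi>) \<le> 2*(1 + cmod \<xi>)/lam"
      "(\<Sum>i\<in>I. 1/(w - a i))^2 + (\<Sum>i\<in>I. 1/(w - a i)^2) \<noteq> 0"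
    using core[OF finI cardI kap lam2 H1 H2 H3 H4] by blast
  have pn: "pn x k xi n = [:- \<xi>, 1:] * (\<Prod>i\<in>I. [:- a i, 1:])"
    unfolding I_def a_def \<xi>_def using pn_split[OF k(1)] k(3) by simp
  have notpole: "z \<notin> a ` I" if "z \<in> U" for z
  proof
    assume "z \<in> a ` I"
    then obtain i where i: "i \<in> I" "z = a i" by auto
    have "\<kappa> * (1 + cmod z) \<le> cmod (z - a i)" using H1 that i(1) by blast
    moreover have "\<kappa> * (1 + cmod z) > 0" using kap Wpos[of z] by simp
    ultimately show False using i by simp
  qed
  have wU: "w \<in> U" using w(1) by auto
  have set: "{z. poly (pderiv (pn x k xi n)) z = 0 \<and> \<not> infdist z A < 2*\<epsilon>} = {w}"
  proof -
    have "{z. poly (pderiv (pn x k xi n)) z = 0 \<and> \<not> infdist z A < 2*\<epsilon>}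
        = {z\<in>U. 1 + (z - \<xi>) * (\<Sum>i\<in>I. 1/(z - a i)) = 0}"
    proof (intro Collect_cong iffI)
      fix z
      show "poly (pderiv (pn x k xi n)) z = 0 \<and> \<not> infdist z A < 2*\<epsilon> \<Longrightarrow>
            z \<in> U \<and> 1 + (z - \<xi>) * (\<Sum>i\<in>I. 1/(z - a i)) = 0"
      proof -
        assume h: "poly (pderiv (pn x k xi n)) z = 0 \<and> \<not> infdist z A < 2*\<epsilon>"
        then have zU: "z \<in> U" unfolding U_def by auto
        have "poly (\<Prod>i\<in>I. [:- a i, 1:]) z * (1 + (z - \<xi>) * (\<Sum>i\<in>I. 1/(z - a i))) = 0"
          using h crit_poly(1)[OF finI notpole[OF zU], of \<xi>] unfolding pn by simp
        then show ?thesis using crit_poly(2)[OF finI notpole[OF zU]] zU by simp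
      qed
      show "z \<in> U \<and> 1 + (z - \<xi>) * (\<Sum>i\<in>I. 1/(z - a i)) = 0 \<Longrightarrow>
            poly (pderiv (pn x k xi n)) z = 0 \<and> \<not> infdist z A < 2*\<epsilon>"
        using crit_poly(1)[OF finI notpole, of z \<xi>] unfolding pn U_def by auto
    qed
    then show ?thesis using w(1) by simp
  qed
  have ord: "order w (pderiv (pn x k xi n)) = 1"
    unfolding pn using crit_poly(3)[OF finI notpole[OF wU]] w(1) w(3) by auto
  have bnd: "cmod (w - xi 1) \<le> (8/c) / real n * (1 + cmod (xi 1))"
  proof -
    have npos: "real n > 0" using k by simp
    have Npos: "real N > 0" using N1 N4 c k by (simp add: divide_le_eq)
    have W0p: "W0 > 0" unfolding W0_def using Wpos by auto
    have "2 * W0 / lam \<le> 2 * W0 / (c * real N / 2)"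
      using lamN c Npos W0p lampos by (intro divide_left_mono) auto
    also have "\<dots> = 4 * W0 / (c * real N)" by (simp add: field_simps)
    also have "\<dots> \<le> 8 * W0 / (c * real n)"
    proof -
      have "real n \<le> 2 * real N" using k N1 by simp
      have "4 * W0 * (c * real n) \<le> 8 * W0 * (c * real N)"
      proof -
        have "(4 * W0 * c) * real n \<le> (4 * W0 * c) * (2 * real N)"
          using \<open>real n \<le> 2 * real N\<close> c W0p by (intro mult_left_mono) auto
        then show ?thesis by (simp add: algebra_simps)
      qed
      then show ?thesis using Npos npos c by (simp add: divide_le_eq le_divide_eq mult.commute)
    qed
    also have "\<dots> = (8/c) / real n * (1 + cmod (xi 1))" unfolding W0_def \<xi>_def by simp
    finally show ?thesis using w(2) unfolding W0_def \<xi>_def by linarith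
  qed
  show ?thesis using set ord bnd by blast
qed



theorem mainTheorem6:
  fixes M :: "'a measure" and X :: "nat \<Rightarrow> 'a \<Rightarrow> complex"
    and \<mu> :: "complex measure" and xi :: "nat \<Rightarrow> nat \<Rightarrow> complex"
    and k :: "nat \<Rightarrow> nat" and K :: nat and \<epsilon> :: real
  assumes "prob_space M"
    and "prob_space \<mu>" and "sets \<mu> = sets borel"
    and "compact (msupp \<mu>)"
    and "\<And>j. X j \<in> borel_measurable M"
    and "prob_space.indep_vars M (\<lambda>_. borel) X UNIV"
    and "\<And>j. distr M borel (X j) = \<mu>"
    and "\<And>n. k n \<le> K"
    and "\<epsilon> > 0"
    and "eventually (\<lambda>n. 1 \<le> k n
           \<and> (\<forall>l\<in>{1..k n}. xi n l \<notin> Nnbhd \<mu> (3*\<epsilon>) - Nnbhd \<mu> \<epsilon>)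
           \<and> xi n 1 \<notin> Nnbhd \<mu> (3*\<epsilon>)
           \<and> (\<forall>l\<in>{2..k n}. xi n l \<in> Nnbhd \<mu> \<epsilon>)) sequentially"
  shows "\<exists>C>0. AE \<omega> in M. eventually (\<lambda>n.
           \<exists>w. {z. poly (pderiv (pn (\<lambda>j. X j \<omega>) (k n) (xi n) n)) z = 0 \<and> z \<notin> Nnbhd \<mu> (2*\<epsilon>)} = {w}
             \<and> order w (pderiv (pn (\<lambda>j. X j \<omega>) (k n) (xi n) n)) = 1
             \<and> cmod (w - xi n 1) \<le> C / real n * (1 + cmod (xi n 1))) sequentially"
proof -
  note P = assms(1) and Pmu = assms(2) and smu = assms(3) and cpt = assms(4) and Xm = assms(5)
    and ind = assms(6) and dX = assms(7) and kK = assms(8) and eps = assms(9) and ev = assms(10)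
  have cl: "closed (msupp \<mu>)" using cpt by (rule compact_imp_closed)
  have Sne: "msupp \<mu> \<noteq> {}"
  proof
    assume e: "msupp \<mu> = {}"
    have "- msupp \<mu> \<in> null_sets \<mu>" by (rule msupp_null[OF Pmu smu])
    then have "emeasure \<mu> UNIV = 0" using e by (simp add: null_sets_def)
    moreover have "space \<mu> = UNIV" using sets_eq_imp_space_eq[OF smu] by simp
    ultimately show False using prob_space.emeasure_space_1[OF Pmu] by simp
  qed
  obtain a0 where a0: "\<forall>x\<in>msupp \<mu>. cmod x \<le> a0"
    using compact_imp_bounded[OF cpt] unfolding bounded_iff by blast
  define BS where "BS = \<bar>a0\<bar>"
  have BS: "\<forall>x\<in>msupp \<mu>. cmod x \<le> BS" "BS \<ge> 0" using a0 unfolding BS_def by force+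
  define A where "A = msupp \<mu> \<union> Mset \<mu>"
  define BA where "BA = 2*BS+1"
  have BA: "BA \<ge> 0" unfolding BA_def using BS by simp
  have Ab: "\<forall>a\<in>A. cmod a \<le> BA"
  proof
    fix a assume a: "a \<in> A"
    show "cmod a \<le> BA"
    proof (rule ccontr)
      assume "\<not> cmod a \<le> BA"
      then have big: "cmod a > 2 * BS" unfolding BA_def by simp
      then have "a \<notin> msupp \<mu>" using BS by force
      then have "a \<in> Mset \<mu>" using a unfolding A_def by simp
      then have "cst \<mu> a = 0" unfolding Mset_def by simp
      moreover have "cst \<mu> a \<noteq> 0" by (rule cst_nonzero_far[OF Pmu smu cl BS big])
      ultimately show False by simp
    qed
  qed
  have Ane: "A \<noteq> {}" using Sne unfolding A_def by simp
  have Nn: "Nnbhd \<mu> r = {z. infdist z A < r}" for r unfolding Nnbhd_def A_def by simp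
  define U where "U = {z. 2*\<epsilon> \<le> infdist z A}"
  have Ud: "\<forall>x\<in>msupp \<mu>. 2*\<epsilon> \<le> dist z x" if "z \<in> U" for z
  proof
    fix x assume "x \<in> msupp \<mu>"
    then have "infdist z A \<le> dist z x" using infdist_le[of x A z] unfolding A_def by simp
    then show "2*\<epsilon> \<le> dist z x" using that unfolding U_def by simp
  qed
  have Um: "cst \<mu> z \<noteq> 0" if "z \<in> U" for z
  proof -
    have "z \<notin> A"
    proof
      assume "z \<in> A"
      then have "infdist z A = 0" by simp
      then show False using that eps unfolding U_def by simp
    qed
    then show ?thesis unfolding A_def Mset_def by auto
  qed
  define R where "R = 3*BS+1"
  define V where "V = U \<inter> cball 0 R"
  have clU: "closed U"
    unfolding U_def by (intro closed_Collect_le continuous_on_const continuous_on_infdist continuous_on_id)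
  have cV: "compact V" unfolding V_def using clU by (intro closed_Int_compact) auto
  obtain c1 where c1: "c1 > 0"
    and LB1: "AE \<omega> in M. eventually (\<lambda>N. \<forall>z\<in>V. c1 * real N \<le> cmod (\<Sum>j\<in>{1..N}. 1/(z - X j \<omega>))) sequentially"
    using LB[OF P Xm ind dX cl cV eps] Ud Um unfolding V_def by blast
  define c where "c = min c1 (1/2)"
  have c: "c > 0" "c \<le> c1" "c \<le> 1/2" unfolding c_def using c1 by auto
  have G0: "AE \<omega> in M. \<forall>j. X j \<omega> \<in> msupp \<mu>" by (rule AE_in_supp[OF P Xm dX cl])
  have LBU: "AE \<omega> in M. eventually (\<lambda>N. \<forall>z. 2*\<epsilon> \<le> infdist z A \<longrightarrow> c * real N / (1 + cmod z) \<le> cmod (\<Sum>j\<in>{1..N}. 1/(z - X j \<omega>))) sequentially"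
    using G0 LB1
  proof eventually_elim
    case (elim \<omega>)
    note inS = elim(1)
    from elim(2) show ?case
    proof eventually_elim
      case (elim N)
      show ?case
      proof (intro allI impI)
        fix z assume zU: "2*\<epsilon> \<le> infdist z A"
        have W: "1 + cmod z \<ge> 1" by simp
        have cN0: "0 \<le> c * real N" using c by simp
        have "c * real N / (1 + cmod z) \<le> c * real N / 1"
          by (rule divide_left_mono[OF W cN0]) (auto intro: add_pos_nonneg)
        then have cN: "c * real N / (1 + cmod z) \<le> c * real N" by simp
        show "c * real N / (1 + cmod z) \<le> cmod (\<Sum>j\<in>{1..N}. 1/(z - X j \<omega>))"
        proof (cases "cmod z \<le> R")
          case True
          then have "z \<in> V" unfolding V_def U_def using zU by simp
          then have "c1 * real N \<le> cmod (\<Sum>j\<in>{1..N}. 1/(z - X j \<omega>))" using elim by blast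
          moreover have "c * real N \<le> c1 * real N" using c by (intro mult_right_mono) auto
          ultimately show ?thesis using cN by linarith
        next
          case False
          have "real N / (2 * cmod z) \<le> cmod (\<Sum>j\<in>{1..N}. 1/(z - X j \<omega>))"
            by (rule far_bound) (use inS BS False in \<open>auto simp: R_def\<close>)
          moreover have "c * real N / (1 + cmod z) \<le> real N / (2 * cmod z)"
          proof -
            have zp: "cmod z > 0" using False BS unfolding R_def by linarith
            have "c * real N / (1 + cmod z) \<le> (1/2) * real N / (1 + cmod z)"
              using c by (intro divide_right_mono mult_right_mono) auto
            also have "\<dots> \<le> (1/2) * real N / cmod z"
              using zp by (intro divide_left_mono mult_pos_pos) (auto intro: add_pos_nonneg)
            finally show ?thesis by simp
          qed
          ultimately show ?thesis by linarith
        qed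
      qed
    qed
  qed
  define \<kappa> where "\<kappa> = \<epsilon> / (1 + (BA + \<epsilon>) + \<epsilon>)"
  define \<kappa>' where "\<kappa>' = \<epsilon> / (1 + (BA + 2*\<epsilon>) + \<epsilon>)"
  define N0 where "N0 = nat \<lceil>max (real K) (max (2 * K / (\<kappa> * c)) (max (16 / (\<kappa>^2 * c^2)) (max (4 / c) (4 / (c * \<kappa>')))))\<rceil>"
  have N0: "real N0 \<ge> real K" "real N0 \<ge> 2 * K / (\<kappa> * c)" "real N0 \<ge> 16 / (\<kappa>^2 * c^2)"
    "real N0 \<ge> 4 / c" "real N0 \<ge> 4 / (c * \<kappa>')"
  proof -
    have m: "max (real K) (max (2 * K / (\<kappa> * c)) (max (16 / (\<kappa>^2 * c^2)) (max (4 / c) (4 / (c * \<kappa>'))))) \<le> real N0"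
      unfolding N0_def by (rule real_nat_ceiling_ge)
    then show "real N0 \<ge> real K" "real N0 \<ge> 2 * K / (\<kappa> * c)" "real N0 \<ge> 16 / (\<kappa>^2 * c^2)"
      "real N0 \<ge> 4 / c" "real N0 \<ge> 4 / (c * \<kappa>')" by (simp_all only: max.bounded_iff)
  qed
  show ?thesis
  proof (intro exI conjI)
    show "8 / c > 0" using c by simp
    show "AE \<omega> in M. eventually (\<lambda>n.
           \<exists>w. {z. poly (pderiv (pn (\<lambda>j. X j \<omega>) (k n) (xi n) n)) z = 0 \<and> z \<notin> Nnbhd \<mu> (2*\<epsilon>)} = {w}
             \<and> order w (pderiv (pn (\<lambda>j. X j \<omega>) (k n) (xi n) n)) = 1
             \<and> cmod (w - xi n 1) \<le> (8 / c) / real n * (1 + cmod (xi n 1))) sequentially"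
      using G0 LBU
    proof eventually_elim
      case (elim \<omega>)
      note inS = elim(1)
      obtain Nw where Nw: "\<And>N. N \<ge> Nw \<Longrightarrow> \<forall>z. 2*\<epsilon> \<le> infdist z A \<longrightarrow> c * real N / (1 + cmod z) \<le> cmod (\<Sum>j\<in>{1..N}. 1/(z - X j \<omega>))"
        using elim(2) unfolding eventually_sequentially by blast
      have ev2: "eventually (\<lambda>n. n \<ge> Nw + N0 + K) sequentially" by (rule eventually_ge_at_top)
      from ev ev2 show ?case
      proof eventually_elim
        case (elim n)
        define N where "N = n - k n"
        have kn: "1 \<le> k n" "k n \<le> K" "n = N + k n" using elim kK[of n] unfolding N_def by auto
        have NN: "N \<ge> Nw" "N \<ge> N0" using elim kK[of n] unfolding N_def by auto
        have rN: "real N \<ge> real N0" using NN by simp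
        have xi1: "3*\<epsilon> \<le> infdist (xi n 1) A" using elim unfolding Nn by auto
        have xil: "\<forall>l\<in>{2..k n}. infdist (xi n l) A < \<epsilon>" using elim unfolding Nn by auto
        have xA: "\<forall>j\<in>{1..N}. X j \<omega> \<in> A" using inS unfolding A_def by auto
        have st: "\<exists>w. {z. poly (pderiv (pn (\<lambda>j. X j \<omega>) (k n) (xi n) n)) z = 0 \<and> \<not> infdist z A < 2*\<epsilon>} = {w}
            \<and> order w (pderiv (pn (\<lambda>j. X j \<omega>) (k n) (xi n) n)) = 1
            \<and> cmod (w - xi n 1) \<le> (8/c) / real n * (1 + cmod (xi n 1))"
        proof (rule step[OF eps c(1) BA Ane Ab xA Nw[OF NN(1)] kn])
          show "real N \<ge> real K" using rN N0 by linarith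
          show "real N \<ge> 2 * K / (\<epsilon> / (1 + (BA + \<epsilon>) + \<epsilon>) * c)" using rN N0 unfolding \<kappa>_def by linarith
          show "real N \<ge> 16 / ((\<epsilon> / (1 + (BA + \<epsilon>) + \<epsilon>))^2 * c^2)" using rN N0 unfolding \<kappa>_def by linarith
          show "real N \<ge> 4 / c" using rN N0 by linarith
          show "real N \<ge> 4 / (c * (\<epsilon> / (1 + (BA + 2*\<epsilon>) + \<epsilon>)))" using rN N0 unfolding \<kappa>'_def by linarith
        qed (use xi1 xil in auto)
        then show ?case unfolding Nn by simp
      qed
    qed
  qed
qed


end
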